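(* Let $\alpha>1$, $r>0$, and let $f:(0,r)\to(0,\infty)$ be a monotonically nondecreasing function such that $f(x)\simeq x^\alpha$ as $x\to0$ and $f(x)<x$ for all $x\in(0,r)$. For $x_1\in(0,r)$ define the sequence $(x_n)_{n\ge1}$ by $x_{n+1}=x_n-f(x_n)$, and let $S(x_1)=\{x_n:n\ge1\}\subset\mathbb{R}$. Then $x_n\simeq n^{-1/(\alpha-1)}$ as $n\to\infty$, $\dim_B S(x_1)=1-\frac1\alpha$, and $S(x_1)$ is Minkowski nondegenerate.
   Context: For sequences of positive reals, $a_n\simeq b_n$ as $n\to\infty$ means there exist constants $0<A\le B$ with $A\le a_n/b_n\le B$ for all $n$. For positive functions, $f(x)\simeq g(x)$ as $x\to0$ means there exist constants $0<A\le B$ with $f(x)/g(x)\in[A,B]$ for all sufficiently small $x>0$. For a bounded set $S\subset\mathbb{R}$ and $\varepsilon>0$, $S_\varepsilon=\{y\in\mathbb{R}: \mathrm{dist}(y,S)<\varepsilon\}$ and $|S_\varepsilon|$ denotes its Lebesgue measure. For $s\ge0$, the upper and lower $s$-dimensional Minkowski contents are $\mathcal M^{*s}(S)=\limsup_{\varepsilon\to0}|S_\varepsilon|/\varepsilon^{1-s}$ and $\mathcal M_*^{s}(S)=\liminf_{\varepsilon\to0}|S_\varepsilon|/\varepsilon^{1-s}$. The upper box dimension is $\overline{\dim}_BS=\inf\{s\ge0:\mathcal M^{*s}(S)=0\}$, the lower box dimension $\underline{\dim}_BS=\inf\{s\ge0:\mathcal M_*^{s}(S)=0\}$; if they coincide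 the common value is $\dim_BS$. $S$ is Minkowski nondegenerate if there is $d\ge0$ with $0<\mathcal M_*^d(S)\le\mathcal M^{*d}(S)<\infty$. A sequence is identified with the set of its terms. *)

theory Defs
  imports "HOL-Analysis.Analysis"
begin

definition simeq_at0 :: "(real \<Rightarrow> real) \<Rightarrow> (real \<Rightarrow> real) \<Rightarrow> bool" where
  "simeq_at0 f g \<longleftrightarrow> (\<exists>A B. 0 < A \<and> A \<le> B \<and>
      (\<forall>\<^sub>F x in at_right 0. A \<le> f x / g x \<and> f x / g x \<le> B))"

definition simeq_seq :: "(nat \<Rightarrow> real) \<Rightarrow> (nat \<Rightarrow> real) \<Rightarrow> bool" where
  "simeq_seq a b \<longleftrightarrow> (\<exists>A B. 0 < A \<and> A \<le> B \<and>
      (\<forall>n\<ge>1. A \<le> a n / b n \<and> a n / b n \<le> B))"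

definition nbhd :: "real set \<Rightarrow> real \<Rightarrow> real set" where
  "nbhd S \<epsilon> = {y. infdist y S < \<epsilon>}"

definition upper_mink :: "real \<Rightarrow> real set \<Rightarrow> ereal" where
  "upper_mink s S = Limsup (at_right 0)
     (\<lambda>\<epsilon>. ereal (measure lebesgue (nbhd S \<epsilon>) / \<epsilon> powr (1 - s)))"

definition lower_mink :: "real \<Rightarrow> real set \<Rightarrow> ereal" where
  "lower_mink s S = Liminf (at_right 0)
     (\<lambda>\<epsilon>. ereal (measure lebesgue (nbhd S \<epsilon>) / \<epsilon> powr (1 - s)))"

definition upper_box_dim :: "real set \<Rightarrow> real" where
  "upper_box_dim S = Inf {s. 0 \<le> s \<and> upper_mink s S = 0}"

definition lower_box_dim :: "real set \<Rightarrow> real" where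
  "lower_box_dim S = Inf {s. 0 \<le> s \<and> lower_mink s S = 0}"

definition has_box_dim :: "real set \<Rightarrow> real \<Rightarrow> bool" where
  "has_box_dim S d \<longleftrightarrow> upper_box_dim S = d \<and> lower_box_dim S = d"

definition mink_nondegenerate :: "real set \<Rightarrow> bool" where
  "mink_nondegenerate S \<longleftrightarrow> (\<exists>d\<ge>0. 0 < lower_mink d S \<and>
      lower_mink d S \<le> upper_mink d S \<and> upper_mink d S < \<infinity>)"

end

theory Submission
  imports Defs "HOL-Real_Asymp.Real_Asymp"
begin


lemma ev_to_all:
  fixes g :: "nat \<Rightarrow> real"
  assumes pos: "\<And>n. n \<ge> 1 \<Longrightarrow> g n > 0" and L: "L > 0"
    and ev0: "\<And>n. n \<ge> N0 \<Longrightarrow> L \<le> g n \<and> g n \<le> U"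
  shows "\<exists>L' U'. 0 < L' \<and> L' \<le> U' \<and> (\<forall>n\<ge>1. L' \<le> g n \<and> g n \<le> U')"
proof -
  define N where "N = max N0 1"
  have ev: "\<And>n. n \<ge> N \<Longrightarrow> L \<le> g n \<and> g n \<le> U" using ev0 unfolding N_def by auto
  have N1: "N \<ge> 1" unfolding N_def by auto
  define L' where "L' = min L (Min (g ` {1..N}) )"
  define U' where "U' = max U (Max (g ` {1..N}))"
  have fin: "finite (g ` {1..N})" by simp
  have b: "L' \<le> g n \<and> g n \<le> U'" if "n \<ge> 1" for n
  proof (cases "n \<le> N")
    case True
    then have "g n \<in> g ` {1..N}" using that by auto
    then show ?thesis unfolding L'_def U'_def using fin
      by (meson Max_ge Min_le max.coboundedI2 min.coboundedI2)
  next
    case False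
    then show ?thesis using ev[of n] unfolding L'_def U'_def by auto
  qed
  have ne: "g ` {1..N} \<noteq> {}" using N1 by auto
  have "Min (g ` {1..N}) > 0" using Min_gr_iff[OF fin ne] pos by auto
  then have "L' > 0" using L unfolding L'_def by auto
  moreover have "L' \<le> U'" using b[of 1] by auto
  ultimately show ?thesis using b by blast
qed

locale S =
  fixes \<alpha> r :: real and f :: "real \<Rightarrow> real" and x :: "nat \<Rightarrow> real"
  assumes al: "\<alpha> > 1" and r: "r > 0"
    and mono: "mono_on {0<..<r} f"
    and fpos: "\<And>t. t \<in> {0<..<r} \<Longrightarrow> f t > 0"
    and sim: "simeq_at0 f (\<lambda>t. t powr \<alpha>)"
    and flt: "\<And>t. t \<in> {0<..<r} \<Longrightarrow> f t < t"
    and x1: "x 1 \<in> {0<..<r}"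
    and rec: "\<And>n. n \<ge> 1 \<Longrightarrow> x (Suc n) = x n - f (x n)"
begin

lemma xin: "n \<ge> 1 \<Longrightarrow> 0 < x n \<and> x n < r"
proof (induct n rule: nat_induct_at_least)
  case base then show ?case using x1 by auto
next
  case (Suc n)
  have "f (x n) < x n" "f (x n) > 0" using Suc flt fpos by auto
  then show ?case using rec[of n] Suc by auto
qed

lemma xdec1: "n \<ge> 1 \<Longrightarrow> x (Suc n) < x n"
  using rec[of n] fpos[of "x n"] xin[of n] by auto

lemma xanti: assumes "1 \<le> m" "m \<le> n" shows "x n \<le> x m"
  using assms(2)
proof (induct n rule: dec_induct)
  case base then show ?case by simp
next
  case (step n)
  then show ?case using xdec1[of n] assms(1) by auto
qed

lemma xsmall: assumes c: "c > 0" shows "\<exists>N\<ge>1. \<forall>n\<ge>N. x n < c"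
proof (rule ccontr)
  assume H: "\<not> (\<exists>N\<ge>1. \<forall>n\<ge>N. x n < c)"
  have ge: "x n \<ge> c" if "n \<ge> 1" for n
  proof -
    from H that obtain m where "m \<ge> n" "\<not> x m < c" by auto
    then show ?thesis using xanti[of n m] that by auto
  qed
  have cr: "c < r" using ge[of 1] xin[of 1] by auto
  have fc: "f c > 0" using fpos c cr by auto
  have bound: "x n \<le> x 1 - (real n - 1) * f c" if "n \<ge> 1" for n
    using that
  proof (induct n rule: nat_induct_at_least)
    case base then show ?case by simp
  next
    case (Suc n)
    have "f c \<le> f (x n)"
      using mono_onD[OF mono, of c "x n"] ge[of n] xin[of n] Suc c cr by auto
    then show ?case using rec[of n] Suc by (auto simp: algebra_simps)
  qed
  define n where "n = nat \<lceil>x 1 / f c\<rceil> + 1"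
  have n1: "n \<ge> 1" unfolding n_def by auto
  have "real n - 1 \<ge> x 1 / f c" unfolding n_def by linarith
  then have "(real n - 1) * f c \<ge> x 1" using fc by (simp add: field_simps)
  then have "x n \<le> 0" using bound[OF n1] by linarith
  then show False using xin[OF n1] by auto
qed

lemma fbounds: "\<exists>A B \<delta>. 0 < A \<and> A \<le> B \<and> 0 < \<delta> \<and> \<delta> \<le> r \<and>
   (\<forall>t. 0 < t \<and> t < \<delta> \<longrightarrow> A * t powr \<alpha> \<le> f t \<and> f t \<le> B * t powr \<alpha>)"
proof -
  obtain A B where AB: "0 < A" "A \<le> B"
    and ev: "\<forall>\<^sub>F t in at_right 0. A \<le> f t / t powr \<alpha> \<and> f t / t powr \<alpha> \<le> B"
    using sim unfolding simeq_at0_def by auto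
  then obtain b where b: "b > 0" "\<forall>t>0. t < b \<longrightarrow> A \<le> f t / t powr \<alpha> \<and> f t / t powr \<alpha> \<le> B"
    unfolding eventually_at_right_field by auto
  have "\<forall>t. 0 < t \<and> t < min b r \<longrightarrow> A * t powr \<alpha> \<le> f t \<and> f t \<le> B * t powr \<alpha>"
  proof (intro allI impI)
    fix t assume t: "0 < t \<and> t < min b r"
    then have p: "t powr \<alpha> > 0" by simp
    from b t have "A \<le> f t / t powr \<alpha> \<and> f t / t powr \<alpha> \<le> B" by auto
    then show "A * t powr \<alpha> \<le> f t \<and> f t \<le> B * t powr \<alpha>"
      using p by (simp add: pos_le_divide_eq pos_divide_le_eq)
  qed
  then show ?thesis using AB b r by (intro exI[of _ A] exI[of _ B] exI[of _ "min b r"]) auto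
qed

end


context S begin

lemma step_bounds:
  assumes AB: "0 < A" "A \<le> B" and d: "0 < \<delta>" "\<delta> \<le> r"
    and fb: "\<forall>t. 0 < t \<and> t < \<delta> \<longrightarrow> A * t powr \<alpha> \<le> f t \<and> f t \<le> B * t powr \<alpha>"
    and n: "n \<ge> 1" and xs: "x n < \<delta>" and xh: "x n powr (\<alpha> - 1) \<le> 1 / (2 * B)"
  shows "(\<alpha> - 1) * A \<le> x (Suc n) powr (-(\<alpha>-1)) - x n powr (-(\<alpha>-1))
       \<and> x (Suc n) powr (-(\<alpha>-1)) - x n powr (-(\<alpha>-1)) \<le> (\<alpha> - 1) * (2 powr \<alpha> * B)"
proof -
  define a where "a = x (Suc n)"
  define b where "b = x n"
  define \<beta> where "\<beta> = \<alpha> - 1"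
  have bpos: "\<beta> > 0" using al unfolding \<beta>_def by auto
  have apos: "a > 0" unfolding a_def using xin[of "Suc n"] n by auto
  have bp: "b > 0" unfolding b_def using xin[of n] n by auto
  have ab: "a < b" unfolding a_def b_def using xdec1[OF n] .
  have fb': "A * b powr \<alpha> \<le> f b \<and> f b \<le> B * b powr \<alpha>" using fb bp xs unfolding b_def by auto
  have fbp: "f b > 0" using fpos xin[OF n] unfolding b_def by auto
  have ba: "b - a = f b" unfolding a_def b_def using rec[OF n] by simp
  have der: "((\<lambda>t. t powr (-\<beta>)) has_real_derivative (-\<beta>) * t powr (-\<beta> - 1)) (at t)"
    if "a \<le> t" "t \<le> b" for t
    using has_real_derivative_powr[of t "-\<beta>"] that apos by auto
  obtain z where z: "a < z" "z < b"
    and eq: "b powr (-\<beta>) - a powr (-\<beta>) = (b - a) * ((-\<beta>) * z powr (-\<beta> - 1))"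
    using MVT2[OF ab der] by blast
  have zpos: "z > 0" using z apos by auto
  have ex: "-\<beta> - 1 = -\<alpha>" unfolding \<beta>_def by simp
  have diff: "a powr (-\<beta>) - b powr (-\<beta>) = \<beta> * (f b * z powr (-\<alpha>))"
    using eq ba ex by (simp add: algebra_simps)
  have one: "b powr \<alpha> * b powr (-\<alpha>) = 1" using bp by (simp add: powr_add[symmetric])
  have bq: "b powr (-\<alpha>) > 0" using bp by simp
  have zl: "z powr (-\<alpha>) \<ge> b powr (-\<alpha>)" using powr_mono2'[of "-\<alpha>" z b] al zpos z by auto
  have "A = A * (b powr \<alpha> * b powr (-\<alpha>))" using one by simp
  also have "\<dots> = (A * b powr \<alpha>) * b powr (-\<alpha>)" by simp
  also have "\<dots> \<le> f b * z powr (-\<alpha>)"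
    using fb' zl bq fbp by (intro mult_mono) (auto intro: order_trans[OF _ zl])
  finally have low: "A \<le> f b * z powr (-\<alpha>)" .
  have Bpos: "B > 0" using AB by auto
  have "b powr \<beta> * b powr 1 = b powr (\<beta> + 1)" by (rule powr_add[symmetric])
  then have "b powr \<alpha> = b powr \<beta> * b" using bp unfolding \<beta>_def by simp
  then have "f b \<le> B * (b powr \<beta> * b)" using fb' by simp
  also have "\<dots> \<le> B * (1 / (2 * B) * b)"
    using xh bp Bpos unfolding b_def \<beta>_def by (intro mult_left_mono mult_right_mono) auto
  also have "\<dots> = b / 2" using Bpos by simp
  finally have fh: "f b \<le> b / 2" .
  have "a \<ge> b / 2" using ba fh by linarith
  then have zh: "z \<ge> b / 2" using z by linarith
  have "z powr (-\<alpha>) \<le> (b / 2) powr (-\<alpha>)" using powr_mono2'[of "-\<alpha>" "b/2" z] al zh bp by auto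
  also have "\<dots> = 2 powr \<alpha> * b powr (-\<alpha>)" using bp
    by (simp add: powr_divide powr_minus divide_simps)
  finally have zu: "z powr (-\<alpha>) \<le> 2 powr \<alpha> * b powr (-\<alpha>)" .
  have "f b * z powr (-\<alpha>) \<le> (B * b powr \<alpha>) * (2 powr \<alpha> * b powr (-\<alpha>))"
    using fb' zu zpos Bpos fbp by (intro mult_mono) (auto intro: less_imp_le)
  also have "\<dots> = 2 powr \<alpha> * B * (b powr \<alpha> * b powr (-\<alpha>))" by (simp add: algebra_simps)
  also have "\<dots> = 2 powr \<alpha> * B" using one by simp
  finally have up: "f b * z powr (-\<alpha>) \<le> 2 powr \<alpha> * B" .
  have "\<beta> * A \<le> \<beta> * (f b * z powr (-\<alpha>))" using low bpos by (intro mult_left_mono) auto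
  moreover have "\<beta> * (f b * z powr (-\<alpha>)) \<le> \<beta> * (2 powr \<alpha> * B)" using up bpos by (intro mult_left_mono) auto
  ultimately show ?thesis using diff unfolding a_def b_def \<beta>_def by (simp add: mult.commute)
qed

end


context S begin

lemma x_asym: "\<exists>a0 b0. 0 < a0 \<and> a0 \<le> b0 \<and>
   (\<forall>n\<ge>1. a0 \<le> x n / real n powr (-1 / (\<alpha> - 1)) \<and> x n / real n powr (-1 / (\<alpha> - 1)) \<le> b0)"
proof -
  obtain A B \<delta> where AB: "0 < A" "A \<le> B" and d: "0 < \<delta>" "\<delta> \<le> r"
    and fb: "\<forall>t. 0 < t \<and> t < \<delta> \<longrightarrow> A * t powr \<alpha> \<le> f t \<and> f t \<le> B * t powr \<alpha>"
    using fbounds by auto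
  define \<beta> where "\<beta> = \<alpha> - 1"
  have bpos: "\<beta> > 0" using al unfolding \<beta>_def by auto
  have Bpos: "B > 0" using AB by auto
  define \<delta>2 where "\<delta>2 = min \<delta> ((1 / (2 * B)) powr (1 / \<beta>))"
  have d2: "\<delta>2 > 0" unfolding \<delta>2_def using d Bpos by auto
  obtain N where N: "N \<ge> 1" "\<forall>n\<ge>N. x n < \<delta>2" using xsmall[OF d2] by auto
  define y where "y n = x n powr (-\<beta>)" for n
  define c1 where "c1 = \<beta> * A"
  define c2 where "c2 = \<beta> * (2 powr \<alpha> * B)"
  have c1pos: "c1 > 0" unfolding c1_def using bpos AB by auto
  have ypos: "y n > 0" if "n \<ge> 1" for n unfolding y_def using xin[OF that] by auto
  have stp: "c1 \<le> y (Suc n) - y n \<and> y (Suc n) - y n \<le> c2" if n: "n \<ge> N" for n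
  proof -
    have n1: "n \<ge> 1" using n N by auto
    have xs: "x n < \<delta>2" using N n by auto
    have "x n powr \<beta> \<le> ((1 / (2 * B)) powr (1 / \<beta>)) powr \<beta>"
      using xs xin[OF n1] bpos unfolding \<delta>2_def by (intro powr_mono2) auto
    also have "\<dots> = 1 / (2 * B)" using bpos Bpos by (simp add: powr_powr)
    finally have xh: "x n powr (\<alpha> - 1) \<le> 1 / (2 * B)" unfolding \<beta>_def .
    have "x n < \<delta>" using xs unfolding \<delta>2_def by auto
    from step_bounds[OF AB d fb n1 this xh] show ?thesis
      unfolding y_def c1_def c2_def \<beta>_def by simp
  qed
  have lin: "y N + c1 * (real n - real N) \<le> y n \<and> y n \<le> y N + c2 * (real n - real N)"
    if "n \<ge> N" for n
    using that
  proof (induct n rule: dec_induct)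
    case base then show ?case by simp
  next
    case (step n)
    from stp[OF step(1)] step(3) show ?case by (simp add: algebra_simps)
  qed
  define g where "g n = y n / real n" for n
  have gpos: "g n > 0" if "n \<ge> 1" for n unfolding g_def using ypos[OF that] that by auto
  have gb: "c1 / 2 \<le> g n \<and> g n \<le> y N + c2" if n: "n \<ge> 2 * N" for n
  proof -
    have n1: "n \<ge> 1" "n \<ge> N" using n N by auto
    have rn: "real n > 0" using n1 by auto
    have yN: "y N > 0" using ypos N by auto
    have "real n - real N \<ge> real n / 2" using n by auto
    then have "c1 * (real n / 2) \<le> c1 * (real n - real N)" using c1pos by (intro mult_left_mono) auto
    then have "c1 / 2 * real n \<le> y n" using lin[OF n1(2)] yN by auto
    then have low: "c1 / 2 \<le> g n" unfolding g_def using rn by (simp add: pos_le_divide_eq)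
    have c2pos: "c2 \<ge> 0" unfolding c2_def using bpos Bpos by auto
    have "y n \<le> y N + c2 * real n" using lin[OF n1(2)] c2pos
      by (smt (verit) mult_left_mono of_nat_0_le_iff)
    also have "\<dots> \<le> (y N + c2) * real n" using yN n1 by (simp add: algebra_simps)
    finally have "g n \<le> y N + c2" unfolding g_def using rn by (simp add: pos_divide_le_eq)
    with low show ?thesis by auto
  qed
  obtain L U where LU: "0 < L" "L \<le> U" "\<forall>n\<ge>1. L \<le> g n \<and> g n \<le> U"
    using ev_to_all[of g "c1/2" "2*N" "y N + c2"] gpos c1pos gb by auto
  define e where "e = -1 / \<beta>"
  have eneg: "e < 0" unfolding e_def using bpos by auto
  have key: "x n / real n powr e = g n powr e" if n: "n \<ge> 1" for n
  proof -
    have xp: "x n > 0" using xin[OF n] by auto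
    have "y n powr e = x n" unfolding y_def e_def using xp bpos by (simp add: powr_powr)
    then show ?thesis unfolding g_def using ypos[OF n] n by (simp add: powr_divide)
  qed
  have "\<forall>n\<ge>1. U powr e \<le> x n / real n powr e \<and> x n / real n powr e \<le> L powr e"
  proof (intro allI impI)
    fix n :: nat assume n: "n \<ge> 1"
    have "L \<le> g n" "g n \<le> U" using LU n by auto
    then have "U powr e \<le> g n powr e" "g n powr e \<le> L powr e"
      using powr_mono2'[of e "g n" U] powr_mono2'[of e L "g n"] eneg LU by auto
    then show "U powr e \<le> x n / real n powr e \<and> x n / real n powr e \<le> L powr e"
      using key[OF n] by simp
  qed
  moreover have "0 < U powr e" "U powr e \<le> L powr e"
    using LU eneg powr_mono2'[of e L U] by auto
  ultimately show ?thesis unfolding e_def \<beta>_def by blast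
qed

end


context S begin

lemma nbhd_mem: "y \<in> nbhd (x ` {1..}) \<epsilon> \<longleftrightarrow> (\<exists>n\<ge>1. dist y (x n) < \<epsilon>)"
proof
  assume "y \<in> nbhd (x ` {1..}) \<epsilon>"
  then have i: "infdist y (x ` {1..}) < \<epsilon>" unfolding nbhd_def by auto
  have ne: "x ` {1..} \<noteq> {}" by auto
  have "infdist y (x ` {1..}) = Inf ((\<lambda>a. dist y a) ` (x ` {1..}))"
    using infdist_notempty[OF ne] by simp
  with i have "Inf ((\<lambda>a. dist y a) ` (x ` {1..})) < \<epsilon>" by simp
  from cInf_lessD[OF _ this] ne obtain a where "a \<in> x ` {1..}" "dist y a < \<epsilon>" by auto
  then show "\<exists>n\<ge>1. dist y (x n) < \<epsilon>" by auto
next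
  assume "\<exists>n\<ge>1. dist y (x n) < \<epsilon>"
  then obtain n where n: "n \<ge> 1" "dist y (x n) < \<epsilon>" by auto
  have "infdist y (x ` {1..}) \<le> dist y (x n)" using n by (intro infdist_le) auto
  then show "y \<in> nbhd (x ` {1..}) \<epsilon>" using n unfolding nbhd_def by auto
qed

lemma nbhd_sub: "nbhd (x ` {1..}) \<epsilon> \<subseteq> {-\<epsilon> <..< x 1 + \<epsilon>}"
proof
  fix y assume "y \<in> nbhd (x ` {1..}) \<epsilon>"
  then obtain n where n: "n \<ge> 1" "dist y (x n) < \<epsilon>" using nbhd_mem by auto
  have "0 < x n" "x n \<le> x 1" using xin[OF n(1)] xanti[of 1 n] n by auto
  then show "y \<in> {-\<epsilon> <..< x 1 + \<epsilon>}" using n(2) unfolding dist_real_def by auto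
qed

lemma nbhd_open: "open (nbhd (x ` {1..}) \<epsilon>)"
  unfolding nbhd_def
  by (intro open_Collect_less continuous_on_infdist continuous_on_id continuous_on_const)

lemma nbhd_sets: "nbhd (x ` {1..}) \<epsilon> \<in> sets lborel"
  using nbhd_open by simp

lemma nbhd_fm: "nbhd (x ` {1..}) \<epsilon> \<in> fmeasurable lborel"
proof (cases "-\<epsilon> \<le> x 1 + \<epsilon>")
  case True
  have "{-\<epsilon> <..< x 1 + \<epsilon>} \<in> fmeasurable lborel" using True by (intro fmeasurableI) auto
  then show ?thesis using nbhd_sub nbhd_sets by (rule fmeasurableI2)
next
  case False
  then have "nbhd (x ` {1..}) \<epsilon> = {}" using nbhd_sub by fastforce
  then show ?thesis by simp
qed

lemma nbhd_measure: "measure lebesgue (nbhd (x ` {1..}) \<epsilon>) = measure lborel (nbhd (x ` {1..}) \<epsilon>)"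
  using nbhd_sets by (rule measure_completion)

end


context S begin

lemma x_asym2: "\<exists>a0 b0. 0 < a0 \<and> a0 \<le> b0 \<and>
   (\<forall>n\<ge>1. a0 * real n powr (-1 / (\<alpha> - 1)) \<le> x n \<and> x n \<le> b0 * real n powr (-1 / (\<alpha> - 1)))"
proof -
  obtain a0 b0 where ab: "0 < a0" "a0 \<le> b0"
    "\<forall>n\<ge>1. a0 \<le> x n / real n powr (-1 / (\<alpha> - 1)) \<and> x n / real n powr (-1 / (\<alpha> - 1)) \<le> b0"
    using x_asym by auto
  have "\<forall>n\<ge>1. a0 * real n powr (-1 / (\<alpha> - 1)) \<le> x n \<and> x n \<le> b0 * real n powr (-1 / (\<alpha> - 1))"
  proof (intro allI impI)
    fix n :: nat assume n: "n \<ge> 1"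
    have p: "real n powr (-1 / (\<alpha> - 1)) > 0" using n by auto
    show "a0 * real n powr (-1 / (\<alpha> - 1)) \<le> x n \<and> x n \<le> b0 * real n powr (-1 / (\<alpha> - 1))"
      using ab(3) n p by (auto simp: pos_le_divide_eq pos_divide_le_eq)
  qed
  then show ?thesis using ab by blast
qed

lemma choose_M:
  assumes ab: "0 < a0" "a0 \<le> b0"
    "\<forall>n\<ge>1. a0 * real n powr (-1 / (\<alpha> - 1)) \<le> x n \<and> x n \<le> b0 * real n powr (-1 / (\<alpha> - 1))"
    and u: "0 < u" "u \<le> b0"
  shows "\<exists>M\<ge>1. x M \<le> u \<and> a0 * 2 powr (-1 / (\<alpha> - 1)) / b0 * u \<le> x M
     \<and> real M \<le> 2 * (u / b0) powr (-(\<alpha> - 1))"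
proof -
  define \<beta> where "\<beta> = \<alpha> - 1"
  have bpos: "\<beta> > 0" using al unfolding \<beta>_def by auto
  define e where "e = -1 / \<beta>"
  have eneg: "e < 0" unfolding e_def using bpos by auto
  define q where "q = u / b0"
  have b0p: "b0 > 0" using ab by auto
  have q: "0 < q" "q \<le> 1" unfolding q_def using u b0p by auto
  define T where "T = q powr (-\<beta>)"
  have "1 powr (-\<beta>) \<le> q powr (-\<beta>)" using q bpos by (intro powr_mono2') auto
  then have T1: "T \<ge> 1" unfolding T_def by simp
  define M where "M = nat \<lceil>T\<rceil>"
  have MT: "real M \<ge> T" unfolding M_def by (rule real_nat_ceiling_ge)
  have MT2: "real M \<le> 2 * T" unfolding M_def using T1 by linarith
  have M1: "M \<ge> 1" using MT T1 by linarith
  have Te: "T powr e = q" unfolding T_def e_def using q bpos by (simp add: powr_powr)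
  have "x M \<le> b0 * real M powr e" using ab(3) M1 unfolding e_def \<beta>_def by auto
  also have "\<dots> \<le> b0 * T powr e" using MT T1 eneg b0p
    by (intro mult_left_mono powr_mono2') auto
  also have "\<dots> = u" using Te b0p unfolding q_def by simp
  finally have up: "x M \<le> u" .
  have M0: "M > 0" using M1 by auto
  have "a0 * 2 powr e / b0 * u = a0 * ((2 * T) powr e)"
    using Te b0p unfolding q_def by (simp add: powr_mult)
  also have "\<dots> \<le> a0 * real M powr e" using MT2 T1 eneg ab(1) M0
    by (intro mult_left_mono powr_mono2') auto
  also have "\<dots> \<le> x M" using ab(3) M1 unfolding e_def \<beta>_def by auto
  finally have low: "a0 * 2 powr e / b0 * u \<le> x M" .
  show ?thesis using M1 up low MT2 unfolding T_def q_def e_def \<beta>_def by auto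
qed

lemma upper_incl:
  assumes M: "M \<ge> 1"
  shows "nbhd (x ` {1..}) \<epsilon> \<subseteq> {-\<epsilon> <..< x M + \<epsilon>} \<union> (\<Union>n\<in>{1..<M}. {x n - \<epsilon> <..< x n + \<epsilon>})"
proof
  fix y assume "y \<in> nbhd (x ` {1..}) \<epsilon>"
  then obtain n where n: "n \<ge> 1" "dist y (x n) < \<epsilon>" using nbhd_mem by auto
  show "y \<in> {-\<epsilon> <..< x M + \<epsilon>} \<union> (\<Union>n\<in>{1..<M}. {x n - \<epsilon> <..< x n + \<epsilon>})"
  proof (cases "n \<ge> M")
    case True
    have "0 < x n" "x n \<le> x M" using xin[OF n(1)] xanti[OF M True] by auto
    then show ?thesis using n(2) unfolding dist_real_def by auto
  next
    case False
    then have "n \<in> {1..<M}" using n by auto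
    moreover have "y \<in> {x n - \<epsilon> <..< x n + \<epsilon>}" using n(2) unfolding dist_real_def by auto
    ultimately show ?thesis by blast
  qed
qed

lemma measure_upper:
  assumes M: "M \<ge> 1" and e: "\<epsilon> > 0"
  shows "measure lborel (nbhd (x ` {1..}) \<epsilon>) \<le> x M + 2 * \<epsilon> * real M"
proof -
  define U where "U = (\<Union>n\<in>{1..<M}. {x n - \<epsilon> <..< x n + \<epsilon>})"
  define T where "T = {-\<epsilon> <..< x M + \<epsilon>} \<union> U"
  have Ts: "T \<in> sets lborel" unfolding T_def U_def by auto
  have TI: "T \<subseteq> {-\<epsilon> <..< x 1 + \<epsilon>}"
  proof
    fix y assume "y \<in> T"
    then consider "y \<in> {-\<epsilon> <..< x M + \<epsilon>}" | n where "n \<in> {1..<M}" "y \<in> {x n - \<epsilon> <..< x n + \<epsilon>}"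
      unfolding T_def U_def by auto
    then show "y \<in> {-\<epsilon> <..< x 1 + \<epsilon>}"
    proof cases
      case 1 then show ?thesis using xanti[of 1 M] M by auto
    next
      case 2 then show ?thesis using xanti[of 1 n] xin[of n] by auto
    qed
  qed
  have "{-\<epsilon> <..< x 1 + \<epsilon>} \<in> fmeasurable lborel" using xin[of 1] e by (intro fmeasurableI) auto
  then have Tf: "T \<in> fmeasurable lborel" using TI Ts by (rule fmeasurableI2)
  have sub: "nbhd (x ` {1..}) \<epsilon> \<subseteq> T" using upper_incl[OF M, of \<epsilon>] unfolding T_def U_def .
  have m1: "measure lborel (nbhd (x ` {1..}) \<epsilon>) \<le> measure lborel T"
    by (rule measure_mono_fmeasurable[OF sub nbhd_sets Tf])
  have m2: "measure lborel T \<le> measure lborel {-\<epsilon> <..< x M + \<epsilon>} + measure lborel U"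
    unfolding T_def by (rule measure_Un_le) (simp_all add: U_def)
  have m3: "measure lborel U \<le> (\<Sum>n\<in>{1..<M}. measure lborel {x n - \<epsilon> <..< x n + \<epsilon>})"
    unfolding U_def by (rule measure_UNION_le) simp_all
  have "\<And>n. measure lborel {x n - \<epsilon> <..< x n + \<epsilon>} = 2 * \<epsilon>" using e by simp
  then have "(\<Sum>n\<in>{1..<M}. measure lborel {x n - \<epsilon> <..< x n + \<epsilon>}) = (\<Sum>n\<in>{1..<M}. 2 * \<epsilon>)"
    by simp
  also have "\<dots> = real (card {1..<M}) * (2 * \<epsilon>)" by simp
  also have "real (card {1..<M}) = real M - 1" using M by (simp add: of_nat_diff)
  finally have m4: "(\<Sum>n\<in>{1..<M}. measure lborel {x n - \<epsilon> <..< x n + \<epsilon>}) = 2 * \<epsilon> * (real M - 1)"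
    by simp
  have m5: "measure lborel {-\<epsilon> <..< x M + \<epsilon>} = x M + 2 * \<epsilon>" using xin[OF M] e by simp
  show ?thesis using m1 m2 m3 m4 m5 by (simp add: algebra_simps)
qed

lemma lower_incl:
  assumes M: "M \<ge> 1" and fM: "f (x M) < 2 * \<epsilon>"
  shows "{0 <..< x M} \<subseteq> nbhd (x ` {1..}) \<epsilon>"
proof
  fix y assume y: "y \<in> {0 <..< x M}"
  obtain N1 where N1: "N1 \<ge> 1" "\<forall>n\<ge>N1. x n < y" using xsmall[of y] y by auto
  define K where "K = {n. M \<le> n \<and> y \<le> x n}"
  have Ksub: "K \<subseteq> {..<N1}"
  proof
    fix n assume "n \<in> K"
    then have "y \<le> x n" unfolding K_def by auto
    show "n \<in> {..<N1}"
    proof (rule ccontr)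
      assume "n \<notin> {..<N1}"
      then have "n \<ge> N1" by simp
      then have "x n < y" using N1(2) by blast
      then show False using \<open>y \<le> x n\<close> by simp
    qed
  qed
  have finK: "finite K" using Ksub by (rule finite_subset) simp
  have MK: "M \<in> K" unfolding K_def using y by auto
  define n where "n = Max K"
  have nK: "n \<in> K" unfolding n_def using finK MK Max_in by blast
  have "Suc n \<notin> K"
  proof
    assume "Suc n \<in> K"
    then have "Suc n \<le> n" unfolding n_def using Max_ge[OF finK] by blast
    then show False by simp
  qed
  then have xs: "x (Suc n) < y" using nK unfolding K_def by auto
  have nM: "n \<ge> M" "y \<le> x n" using nK unfolding K_def by auto
  have n1: "n \<ge> 1" using nM M by auto
  have "f (x n) \<le> f (x M)"
    using mono_onD[OF mono, of "x n" "x M"] xin[OF n1] xin[OF M] xanti[OF M nM(1)] by auto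
  then have gap: "x n - x (Suc n) < 2 * \<epsilon>" using rec[OF n1] fM by auto
  show "y \<in> nbhd (x ` {1..}) \<epsilon>"
  proof (cases "x n - y < \<epsilon>")
    case True
    then have "dist y (x n) < \<epsilon>" using nM unfolding dist_real_def by auto
    then show ?thesis using nbhd_mem n1 by blast
  next
    case False
    then have "dist y (x (Suc n)) < \<epsilon>" using gap xs unfolding dist_real_def by auto
    moreover have "Suc n \<ge> 1" by simp
    ultimately show ?thesis using nbhd_mem[of y \<epsilon>] by blast
  qed
qed

lemma measure_lower:
  assumes M: "M \<ge> 1" and fM: "f (x M) < 2 * \<epsilon>"
  shows "x M \<le> measure lborel (nbhd (x ` {1..}) \<epsilon>)"
proof -
  have "measure lborel {0 <..< x M} \<le> measure lborel (nbhd (x ` {1..}) \<epsilon>)"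
    by (rule measure_mono_fmeasurable[OF lower_incl[OF M fM] _ nbhd_fm]) simp
  then show ?thesis using xin[OF M] by simp
qed

end


context S begin

lemma meas_bounds: "\<exists>c1 c2 \<epsilon>0. 0 < c1 \<and> 0 < \<epsilon>0 \<and> \<epsilon>0 \<le> 1 \<and>
  (\<forall>\<epsilon>. 0 < \<epsilon> \<and> \<epsilon> < \<epsilon>0 \<longrightarrow> c1 * \<epsilon> powr (1 / \<alpha>) \<le> measure lebesgue (nbhd (x ` {1..}) \<epsilon>)
      \<and> measure lebesgue (nbhd (x ` {1..}) \<epsilon>) \<le> c2 * \<epsilon> powr (1 / \<alpha>))"
proof -
  obtain a0 b0 where ab: "0 < a0" "a0 \<le> b0"
    "\<forall>n\<ge>1. a0 * real n powr (-1 / (\<alpha> - 1)) \<le> x n \<and> x n \<le> b0 * real n powr (-1 / (\<alpha> - 1))"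
    using x_asym2 by auto
  obtain A B \<delta> where AB: "0 < A" "A \<le> B" and d: "0 < \<delta>" "\<delta> \<le> r"
    and fb: "\<forall>t. 0 < t \<and> t < \<delta> \<longrightarrow> A * t powr \<alpha> \<le> f t \<and> f t \<le> B * t powr \<alpha>"
    using fbounds by auto
  have b0p: "b0 > 0" using ab by auto
  have Bp: "B > 0" using AB by auto
  have alp: "\<alpha> > 0" using al by auto
  define c where "c = a0 * 2 powr (-1 / (\<alpha> - 1)) / b0"
  have cp: "c > 0" unfolding c_def using ab b0p by auto
  define v where "v = min b0 (\<delta> / 2)"
  have vp: "v > 0" unfolding v_def using b0p d by auto
  define \<epsilon>0 where "\<epsilon>0 = min 1 (min (B * v powr \<alpha>) (b0 powr \<alpha>))"
  have e0: "0 < \<epsilon>0" "\<epsilon>0 \<le> 1" unfolding \<epsilon>0_def using Bp vp b0p by auto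
  define c1 where "c1 = c / B powr (1 / \<alpha>)"
  define c2 where "c2 = 1 + 4 * b0 powr (\<alpha> - 1)"
  have c1p: "c1 > 0" unfolding c1_def using cp Bp by auto
  have main: "c1 * \<epsilon> powr (1 / \<alpha>) \<le> measure lebesgue (nbhd (x ` {1..}) \<epsilon>)
      \<and> measure lebesgue (nbhd (x ` {1..}) \<epsilon>) \<le> c2 * \<epsilon> powr (1 / \<alpha>)"
    if e: "0 < \<epsilon>" "\<epsilon> < \<epsilon>0" for \<epsilon>
  proof -
    define m where "m = measure lborel (nbhd (x ` {1..}) \<epsilon>)"
    have mm: "measure lebesgue (nbhd (x ` {1..}) \<epsilon>) = m" unfolding m_def by (rule nbhd_measure)
    define u1 where "u1 = \<epsilon> powr (1 / \<alpha>)"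
    have u1p: "u1 > 0" unfolding u1_def using e by auto
    have "\<epsilon> \<le> b0 powr \<alpha>" using e unfolding \<epsilon>0_def by auto
    then have "\<epsilon> powr (1 / \<alpha>) \<le> (b0 powr \<alpha>) powr (1 / \<alpha>)" using e alp by (intro powr_mono2) auto
    also have "\<dots> = b0" using b0p alp by (simp add: powr_powr)
    finally have u1b: "u1 \<le> b0" unfolding u1_def .
    obtain M where M: "M \<ge> 1" "x M \<le> u1" "real M \<le> 2 * (u1 / b0) powr (-(\<alpha> - 1))"
      using choose_M[OF ab u1p u1b] by auto
    have eq1: "\<epsilon> * u1 powr (-(\<alpha> - 1)) = u1"
    proof -
      have "u1 powr (-(\<alpha> - 1)) = \<epsilon> powr ((1 / \<alpha>) * (-(\<alpha> - 1)))" unfolding u1_def by (simp add: powr_powr)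
      then have "\<epsilon> * u1 powr (-(\<alpha> - 1)) = \<epsilon> powr (1 + (1 / \<alpha>) * (-(\<alpha> - 1)))"
        using e by (simp add: powr_mult_base)
      also have "1 + (1 / \<alpha>) * (-(\<alpha> - 1)) = 1 / \<alpha>" using alp by (simp add: field_simps)
      finally show ?thesis unfolding u1_def .
    qed
    have eq2: "(u1 / b0) powr (-(\<alpha> - 1)) = u1 powr (-(\<alpha> - 1)) * b0 powr (\<alpha> - 1)"
    proof -
      have h: "b0 powr (\<alpha> - 1) * b0 powr (1 - \<alpha>) = 1" using b0p by (simp add: powr_add[symmetric])
      show ?thesis using u1p b0p h by (simp add: powr_divide powr_minus divide_simps)
    qed
    have "m \<le> x M + 2 * \<epsilon> * real M" unfolding m_def by (rule measure_upper[OF M(1) e(1)])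
    also have "\<dots> \<le> u1 + 2 * \<epsilon> * (2 * (u1 / b0) powr (-(\<alpha> - 1)))"
      using M e by (intro add_mono mult_left_mono) auto
    also have "\<dots> = u1 + 4 * b0 powr (\<alpha> - 1) * (\<epsilon> * u1 powr (-(\<alpha> - 1)))"
      unfolding eq2 by (simp add: algebra_simps)
    also have "\<dots> = c2 * u1" unfolding eq1 c2_def by (simp add: algebra_simps)
    finally have up: "m \<le> c2 * \<epsilon> powr (1 / \<alpha>)" unfolding u1_def .
    define u2 where "u2 = (\<epsilon> / B) powr (1 / \<alpha>)"
    have u2p: "u2 > 0" unfolding u2_def using e Bp by auto
    have "\<epsilon> / B \<le> v powr \<alpha>" using e Bp unfolding \<epsilon>0_def by (auto simp: pos_divide_le_eq mult.commute)
    then have "(\<epsilon> / B) powr (1 / \<alpha>) \<le> (v powr \<alpha>) powr (1 / \<alpha>)" using e Bp alp by (intro powr_mono2) auto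
    also have "\<dots> = v" using vp alp by (simp add: powr_powr)
    finally have u2v: "u2 \<le> v" unfolding u2_def .
    have u2b: "u2 \<le> b0" "u2 < \<delta>" using u2v d unfolding v_def by auto
    obtain M2 where M2: "M2 \<ge> 1" "x M2 \<le> u2" "c * u2 \<le> x M2"
      using choose_M[OF ab u2p u2b(1)] unfolding c_def by auto
    have xM2: "0 < x M2" "x M2 < \<delta>" using xin[OF M2(1)] M2 u2b by auto
    have "f (x M2) \<le> B * x M2 powr \<alpha>" using fb xM2 by auto
    also have "\<dots> \<le> B * u2 powr \<alpha>" using M2 xM2 Bp alp by (intro mult_left_mono powr_mono2) auto
    also have "u2 powr \<alpha> = \<epsilon> / B" unfolding u2_def using e Bp alp by (simp add: powr_powr)
    finally have "f (x M2) \<le> \<epsilon>" using Bp by simp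
    then have fM: "f (x M2) < 2 * \<epsilon>" using e by auto
    have "c * u2 \<le> m" unfolding m_def using M2(3) measure_lower[OF M2(1) fM] by linarith
    moreover have "c * u2 = c1 * \<epsilon> powr (1 / \<alpha>)" unfolding u2_def c1_def using e Bp
      by (simp add: powr_divide)
    ultimately have lo: "c1 * \<epsilon> powr (1 / \<alpha>) \<le> m" by simp
    show ?thesis using up lo mm by simp
  qed
  show ?thesis using c1p e0 main by blast
qed

end



lemma mink_from_bounds:
  fixes S :: "real set" and D c1 c2 \<epsilon>0 :: real
  assumes D: "0 < D" "D < 1"
    and c: "0 < c1" "0 < \<epsilon>0" "\<epsilon>0 \<le> 1"
    and b: "\<forall>\<epsilon>. 0 < \<epsilon> \<and> \<epsilon> < \<epsilon>0 \<longrightarrow> c1 * \<epsilon> powr (1 - D) \<le> measure lebesgue (nbhd S \<epsilon>)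
             \<and> measure lebesgue (nbhd S \<epsilon>) \<le> c2 * \<epsilon> powr (1 - D)"
  shows "has_box_dim S D \<and> mink_nondegenerate S"
proof -
  define m where "m \<epsilon> = measure lebesgue (nbhd S \<epsilon>)" for \<epsilon>
  define R where "R s \<epsilon> = m \<epsilon> / \<epsilon> powr (1 - s)" for s \<epsilon>
  have up_def': "upper_mink s S = Limsup (at_right 0) (\<lambda>\<epsilon>. ereal (R s \<epsilon>))" for s
    unfolding upper_mink_def R_def m_def ..
  have lo_def': "lower_mink s S = Liminf (at_right 0) (\<lambda>\<epsilon>. ereal (R s \<epsilon>))" for s
    unfolding lower_mink_def R_def m_def ..
  have ev: "\<forall>\<^sub>F \<epsilon> in at_right 0. 0 < \<epsilon> \<and> \<epsilon> < \<epsilon>0"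
    unfolding eventually_at_right_field using c by auto
  have nt: "at_right (0::real) \<noteq> bot" by simp
  have mpos: "m \<epsilon> \<ge> 0" for \<epsilon> unfolding m_def by simp
  have low: "ereal c1 \<le> lower_mink s S \<and> ereal c1 \<le> upper_mink s S" if s: "s \<le> D" for s
  proof -
    have "\<forall>\<^sub>F \<epsilon> in at_right 0. ereal c1 \<le> ereal (R s \<epsilon>)"
      using ev
    proof (rule eventually_mono)
      fix \<epsilon> :: real assume e: "0 < \<epsilon> \<and> \<epsilon> < \<epsilon>0"
      have p: "\<epsilon> powr (1 - s) > 0" using e by simp
      have "\<epsilon> \<le> 1" using e c by auto
      then have "\<epsilon> powr (s - D) \<ge> 1 powr (s - D)" using e s by (intro powr_mono2') auto
      then have "\<epsilon> powr (s - D) \<ge> 1" by simp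
      then have "c1 * 1 \<le> c1 * \<epsilon> powr (s - D)" using c by (intro mult_left_mono) auto
      also have "\<epsilon> powr (s - D) = \<epsilon> powr (1 - D) / \<epsilon> powr (1 - s)"
        using e by (simp add: powr_diff[symmetric])
      finally have "c1 * \<epsilon> powr (1 - s) \<le> c1 * \<epsilon> powr (1 - D)" using p by (simp add: field_simps)
      also have "\<dots> \<le> m \<epsilon>" using b e unfolding m_def by auto
      finally show "ereal c1 \<le> ereal (R s \<epsilon>)" unfolding R_def using p by (simp add: pos_le_divide_eq)
    qed
    then have "ereal c1 \<le> lower_mink s S" unfolding lo_def' by (rule Liminf_bounded)
    moreover have "lower_mink s S \<le> upper_mink s S" unfolding lo_def' up_def'
      by (rule Liminf_le_Limsup[OF nt])
    ultimately show ?thesis by auto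
  qed
  have zero: "lower_mink s S = 0 \<and> upper_mink s S = 0" if s: "s > D" for s
  proof -
    have g: "((\<lambda>\<epsilon>. c2 * \<epsilon> powr (s - D)) \<longlongrightarrow> 0) (at_right 0)"
      using s by real_asymp
    have "\<forall>\<^sub>F \<epsilon> in at_right 0. 0 \<le> R s \<epsilon>"
      using ev by (rule eventually_mono) (simp add: R_def mpos)
    moreover have "\<forall>\<^sub>F \<epsilon> in at_right 0. R s \<epsilon> \<le> c2 * \<epsilon> powr (s - D)"
      using ev
    proof (rule eventually_mono)
      fix \<epsilon> :: real assume e: "0 < \<epsilon> \<and> \<epsilon> < \<epsilon>0"
      have p: "\<epsilon> powr (1 - s) > 0" using e by simp
      have "m \<epsilon> \<le> c2 * \<epsilon> powr (1 - D)" using b e unfolding m_def by auto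
      also have "\<epsilon> powr (1 - D) = \<epsilon> powr (s - D) * \<epsilon> powr (1 - s)"
        using e by (simp add: powr_add[symmetric])
      finally show "R s \<epsilon> \<le> c2 * \<epsilon> powr (s - D)" unfolding R_def using p
        by (simp add: pos_divide_le_eq mult.assoc)
    qed
    ultimately have "((\<lambda>\<epsilon>. R s \<epsilon>) \<longlongrightarrow> 0) (at_right 0)"
      by (intro tendsto_sandwich[OF _ _ tendsto_const g]) auto
    then have t: "((\<lambda>\<epsilon>. ereal (R s \<epsilon>)) \<longlongrightarrow> ereal 0) (at_right 0)" by (rule tendsto_ereal)
    have "lower_mink s S = ereal 0" unfolding lo_def' using nt t by (intro lim_imp_Liminf) auto
    moreover have "upper_mink s S = ereal 0" unfolding up_def' using nt t by (intro lim_imp_Limsup) auto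
    ultimately show ?thesis by (simp add: zero_ereal_def)
  qed
  have setU: "{s. 0 \<le> s \<and> upper_mink s S = 0} = {D<..}"
  proof (intro set_eqI iffI)
    fix s assume "s \<in> {s. 0 \<le> s \<and> upper_mink s S = 0}"
    then have "upper_mink s S = 0" by auto
    moreover have "s \<le> D \<Longrightarrow> ereal c1 \<le> upper_mink s S" using low by auto
    ultimately show "s \<in> {D<..}" using c by (cases "s \<le> D") (auto simp: zero_ereal_def)
  next
    fix s assume "s \<in> {D<..}"
    then show "s \<in> {s. 0 \<le> s \<and> upper_mink s S = 0}" using zero D by auto
  qed
  have setL: "{s. 0 \<le> s \<and> lower_mink s S = 0} = {D<..}"
  proof (intro set_eqI iffI)
    fix s assume "s \<in> {s. 0 \<le> s \<and> lower_mink s S = 0}"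
    then have "lower_mink s S = 0" by auto
    moreover have "s \<le> D \<Longrightarrow> ereal c1 \<le> lower_mink s S" using low by auto
    ultimately show "s \<in> {D<..}" using c by (cases "s \<le> D") (auto simp: zero_ereal_def)
  next
    fix s assume "s \<in> {D<..}"
    then show "s \<in> {s. 0 \<le> s \<and> lower_mink s S = 0}" using zero D by auto
  qed
  have hb: "has_box_dim S D"
    unfolding has_box_dim_def upper_box_dim_def lower_box_dim_def setU setL by simp
  have ub: "upper_mink D S \<le> ereal c2"
    unfolding up_def'
  proof (rule Limsup_bounded)
    show "\<forall>\<^sub>F \<epsilon> in at_right 0. ereal (R D \<epsilon>) \<le> ereal c2"
      using ev
    proof (rule eventually_mono)
      fix \<epsilon> :: real assume e: "0 < \<epsilon> \<and> \<epsilon> < \<epsilon>0"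
      have p: "\<epsilon> powr (1 - D) > 0" using e by simp
      have "m \<epsilon> \<le> c2 * \<epsilon> powr (1 - D)" using b e unfolding m_def by auto
      then show "ereal (R D \<epsilon>) \<le> ereal c2" unfolding R_def using p by (simp add: pos_divide_le_eq)
    qed
  qed
  have "(0::ereal) < ereal c1" using c by simp
  moreover have "ereal c1 \<le> lower_mink D S" using low[of D] by simp
  ultimately have "0 < lower_mink D S" by (rule less_le_trans)
  moreover have "lower_mink D S \<le> upper_mink D S" unfolding lo_def' up_def'
    by (rule Liminf_le_Limsup[OF nt])
  moreover have "upper_mink D S < \<infinity>" using ub by (rule le_less_trans) simp
  ultimately have "mink_nondegenerate S" unfolding mink_nondegenerate_def using D
    by (intro exI[of _ D]) auto
  with hb show ?thesis by auto
qed



theorem theorem1: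
  fixes \<alpha> r x1 :: real and f :: "real \<Rightarrow> real" and x :: "nat \<Rightarrow> real"
  assumes "\<alpha> > 1" and "r > 0"
    and "mono_on {0<..<r} f"
    and "\<And>t. t \<in> {0<..<r} \<Longrightarrow> f t > 0"
    and "simeq_at0 f (\<lambda>t. t powr \<alpha>)"
    and "\<And>t. t \<in> {0<..<r} \<Longrightarrow> f t < t"
    and "x1 \<in> {0<..<r}"
    and "x 1 = x1"
    and "\<And>n. n \<ge> 1 \<Longrightarrow> x (Suc n) = x n - f (x n)"
  shows "simeq_seq x (\<lambda>n. real n powr (-1 / (\<alpha> - 1)))
     \<and> has_box_dim (x ` {1..}) (1 - 1 / \<alpha>)
     \<and> mink_nondegenerate (x ` {1..})"
proof -
  interpret S \<alpha> r f x
    using assms by unfold_locales auto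
  have p1: "simeq_seq x (\<lambda>n. real n powr (-1 / (\<alpha> - 1)))"
    using x_asym unfolding simeq_seq_def by blast
  obtain c1 c2 \<epsilon>0 where c: "0 < c1" "0 < \<epsilon>0" "\<epsilon>0 \<le> 1"
    and b: "\<forall>\<epsilon>. 0 < \<epsilon> \<and> \<epsilon> < \<epsilon>0 \<longrightarrow> c1 * \<epsilon> powr (1 / \<alpha>) \<le> measure lebesgue (nbhd (x ` {1..}) \<epsilon>)
      \<and> measure lebesgue (nbhd (x ` {1..}) \<epsilon>) \<le> c2 * \<epsilon> powr (1 / \<alpha>)"
    using meas_bounds by blast
  have D: "0 < 1 - 1 / \<alpha>" "1 - 1 / \<alpha> < 1" using assms(1) by (auto simp: field_simps)
  have b': "\<forall>\<epsilon>. 0 < \<epsilon> \<and> \<epsilon> < \<epsilon>0 \<longrightarrow> c1 * \<epsilon> powr (1 - (1 - 1 / \<alpha>)) \<le> measure lebesgue (nbhd (x ` {1..}) \<epsilon>)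
      \<and> measure lebesgue (nbhd (x ` {1..}) \<epsilon>) \<le> c2 * \<epsilon> powr (1 - (1 - 1 / \<alpha>))"
    using b by simp
  have "has_box_dim (x ` {1..}) (1 - 1 / \<alpha>) \<and> mink_nondegenerate (x ` {1..})"
    by (rule mink_from_bounds[OF D c b'])
  with p1 show ?thesis by blast
qed

end
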